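(* Let $k\in\mathbb{N}$. The set $$\mathcal{P}=\Big\{\sum_{i=1}^N a_i p_{v_i}: N\in\mathbb{N},\ a_i\in\mathbb{C},\ v_i\in T\Big\}$$ is dense in $\mathcal{L}^{(k)}_0$ with respect to the norm $\|\cdot\|_k$. In fact, $\mathcal{L}^{(k)}_0$ is a closed separable subspace of $\mathcal{L}^{(k)}$.
   Context: $T$ is a tree (locally finite, connected, simply connected graph, identified with its vertex set) without terminal vertices, rooted at $o$. $|v|$ is the distance from $o$ to $v$; for $v\ne o$, $v^-$ is the parent of $v$. $T^*=T\setminus\{o\}$, $Df(v)=|f(v)-f(v^-)|$. For $x\ge1$: $\ell_0(x)=1$, $\ell_1(x)=1+\ln x$, $\ell_j(x)=1+\ln\ell_{j-1}(x)$ for $j\ge2$. $\mathcal{L}^{(k)}$ is the space of $f:T\to\mathbb{C}$ with $\sup_{v\in T^*}|v|\prod_{j=0}^{k-1}\ell_j(|v|)Df(v)<\infty$, normed by $\|f\|_k=|f(o)|+\sup_{v\in T^*}|v|\prod_{j=0}^{k-1}\ell_j(|v|)Df(v)$; $\mathcal{L}^{(k)}_0$ is its subspace of $f$ with $\lim_{|v|\to\infty}|v|\prod_{j=0}^{k-1}\ell_j(|v|)Df(v)=0$. For $v\in T$, $S_v$ is the sector consisting of $v$ and all its descendants (vertices $w$ such that $v$ lies on the path from $o$ to $w$), and $p_v=\chi_{S_v}$ is its characteristic function. *)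

theory Defs
  imports "HOL-Analysis.Analysis"
begin

text \<open>A rooted tree is represented on the vertex type 'v by a parent map par and
a root r: par r = r, and every vertex reaches the root by iterating par
(this gives connectedness and absence of cycles).\<close>

definition rooted_tree :: "('v \<Rightarrow> 'v) \<Rightarrow> 'v \<Rightarrow> bool" where
  "rooted_tree par r \<longleftrightarrow> par r = r \<and> (\<forall>v. \<exists>n. (par ^^ n) v = r)"

definition children :: "('v \<Rightarrow> 'v) \<Rightarrow> 'v \<Rightarrow> 'v \<Rightarrow> 'v set" where
  "children par r v = {w. w \<noteq> r \<and> par w = v}"

text \<open>Locally finite and without terminal vertices (every vertex has degree at least 2;
the degree of v is the number of children plus one if v is not the root).\<close>
definition good_tree :: "('v \<Rightarrow> 'v) \<Rightarrow> 'v \<Rightarrow> bool" where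
  "good_tree par r \<longleftrightarrow> rooted_tree par r
     \<and> (\<forall>v. finite (children par r v))
     \<and> (\<forall>v. card (children par r v) + (if v = r then 0 else 1) \<ge> 2)"

definition vlen :: "('v \<Rightarrow> 'v) \<Rightarrow> 'v \<Rightarrow> 'v \<Rightarrow> nat" where
  "vlen par r v = (LEAST n. (par ^^ n) v = r)"

fun ell :: "nat \<Rightarrow> real \<Rightarrow> real" where
  "ell 0 x = 1"
| "ell (Suc 0) x = 1 + ln x"
| "ell (Suc (Suc j)) x = 1 + ln (ell (Suc j) x)"

definition wt :: "nat \<Rightarrow> nat \<Rightarrow> real" where
  "wt k n = real n * (\<Prod>j<k. ell j (real n))"

definition Dif :: "('v \<Rightarrow> 'v) \<Rightarrow> ('v \<Rightarrow> complex) \<Rightarrow> 'v \<Rightarrow> real" where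
  "Dif par f v = cmod (f v - f (par v))"

definition Lk :: "('v \<Rightarrow> 'v) \<Rightarrow> 'v \<Rightarrow> nat \<Rightarrow> ('v \<Rightarrow> complex) set" where
  "Lk par r k = {f. bdd_above ((\<lambda>v. wt k (vlen par r v) * Dif par f v) ` {v. v \<noteq> r})}"

definition Lk0 :: "('v \<Rightarrow> 'v) \<Rightarrow> 'v \<Rightarrow> nat \<Rightarrow> ('v \<Rightarrow> complex) set" where
  "Lk0 par r k = {f \<in> Lk par r k. \<forall>\<epsilon>>0. \<exists>M. \<forall>v. v \<noteq> r \<longrightarrow> vlen par r v \<ge> M \<longrightarrow>
        wt k (vlen par r v) * Dif par f v < \<epsilon>}"

definition normk :: "('v \<Rightarrow> 'v) \<Rightarrow> 'v \<Rightarrow> nat \<Rightarrow> ('v \<Rightarrow> complex) \<Rightarrow> real" where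
  "normk par r k f = cmod (f r) + (SUP v\<in>{v. v \<noteq> r}. wt k (vlen par r v) * Dif par f v)"

text \<open>Characteristic function of the sector S_v: w is in S_v iff v is on the path from r to w.\<close>
definition pv :: "('v \<Rightarrow> 'v) \<Rightarrow> 'v \<Rightarrow> 'v \<Rightarrow> complex" where
  "pv par v w = (if \<exists>n. (par ^^ n) w = v then 1 else 0)"

definition Pset :: "('v \<Rightarrow> 'v) \<Rightarrow> ('v \<Rightarrow> complex) set" where
  "Pset par = {g. \<exists>(N::nat) (a::nat \<Rightarrow> complex) vs. g = (\<lambda>w. \<Sum>i<N. a i * pv par (vs i) w)}"

end

theory Submission imports Defs begin

lemma fp_iter: "par r = r \<Longrightarrow> (par^^j) r = r"
  by (induction j) auto

lemma reach_mono:
  assumes "par r = r" "(par^^K) w = r" "K \<le> J" shows "(par^^J) w = r"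
proof -
  have "J = (J-K)+K" using assms(3) by simp
  then have "(par^^J) w = (par^^(J-K)) ((par^^K) w)" by (metis comp_apply funpow_add)
  then show ?thesis using assms fp_iter by metis
qed

lemma no_cycle:
  assumes rt: "rooted_tree par r" and wr: "w \<noteq> r"
  shows "(par^^Suc n) w \<noteq> w"
proof
  assume eq: "(par^^Suc n) w = w"
  have all: "(par^^(m*Suc n)) w = w" for m
  proof (induction m)
    case 0 then show ?case by simp
  next
    case (Suc m)
    have "(par^^(Suc m*Suc n)) w = (par^^Suc n) ((par^^(m*Suc n)) w)"
      by (metis comp_apply funpow_add mult_Suc)
    then show ?case using Suc eq by simp
  qed
  obtain K where K: "(par^^K) w = r" using rt unfolding rooted_tree_def by blast
  have "(par^^(K*Suc n)) w = r" using reach_mono[OF _ K] rt unfolding rooted_tree_def by simp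
  then show False using all wr by simp
qed

lemma pv_step:
  assumes rt: "rooted_tree par r" and wr: "w \<noteq> r"
  shows "pv par u w - pv par u (par w) = (if u = w then 1 else 0)"
proof -
  have e: "(\<exists>n. (par^^n) w = u) \<longleftrightarrow> (u = w \<or> (\<exists>n. (par^^n) (par w) = u))"
  proof
    assume "\<exists>n. (par^^n) w = u"
    then obtain n where n: "(par^^n) w = u" by blast
    show "u = w \<or> (\<exists>n. (par^^n) (par w) = u)"
    proof (cases n)
      case 0 then show ?thesis using n by simp
    next
      case (Suc m) then show ?thesis using n by (metis comp_apply funpow_Suc_right)
    qed
  next
    assume "u = w \<or> (\<exists>n. (par^^n) (par w) = u)"
    then show "\<exists>n. (par^^n) w = u"
      by (metis comp_apply funpow_0 funpow_Suc_right)
  qed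
  have ne: "\<not> (\<exists>n. (par^^n) (par w) = w)"
    using no_cycle[OF rt wr] by (metis comp_apply funpow_Suc_right)
  show ?thesis unfolding pv_def using e ne by auto
qed

lemma pv_root:
  assumes rt: "rooted_tree par r"
  shows "pv par u r = (if u = r then 1 else 0)"
  using fp_iter[of par r] rt unfolding pv_def rooted_tree_def by (auto intro: exI[of _ 0])

lemma vlen_reach: "rooted_tree par r \<Longrightarrow> (par^^(vlen par r v)) v = r"
proof -
  assume "rooted_tree par r"
  then obtain n where "(par^^n) v = r" unfolding rooted_tree_def by blast
  then show ?thesis unfolding vlen_def by (rule LeastI)
qed

lemma vlen_le: "(par^^n) v = r \<Longrightarrow> vlen par r v \<le> n"
  unfolding vlen_def by (rule Least_le)

lemma finite_ball:
  assumes gt: "good_tree par r" shows "finite {u. (par^^n) u = r}"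
proof (induction n)
  case 0 then show ?case by simp
next
  case (Suc n)
  have fc: "finite (children par r v)" for v using gt unfolding good_tree_def by blast
  have "{u. (par^^Suc n) u = r} \<subseteq> insert r (\<Union>p\<in>{u. (par^^n) u = r}. children par r p)"
  proof
    fix u assume "u \<in> {u. (par^^Suc n) u = r}"
    then have "(par^^n) (par u) = r" using funpow_swap1[of par n u] by simp
    show "u \<in> insert r (\<Union>p\<in>{u. (par^^n) u = r}. children par r p)"
    proof (cases "u = r")
      case True then show ?thesis by simp
    next
      case False
      then have "u \<in> children par r (par u)" unfolding children_def by simp
      then show ?thesis using \<open>(par^^n) (par u) = r\<close> by blast
    qed
  qed
  moreover have "finite (insert r (\<Union>p\<in>{u. (par^^n) u = r}. children par r p))"
    using Suc fc by (intro finite.insertI finite_UN_I) 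
  ultimately show ?case by (rule finite_subset)
qed

lemma countable_vertices:
  fixes par :: "'v \<Rightarrow> 'v"
  assumes gt: "good_tree par r" shows "countable (UNIV :: 'v set)"
proof -
  have "(UNIV :: 'v set) = (\<Union>n. {u. (par^^n) u = r})"
    using gt unfolding good_tree_def rooted_tree_def by blast
  moreover have "countable (\<Union>n. {u. (par^^n) u = r})"
    using finite_ball[OF gt] by (intro countable_UN) (auto intro: countable_finite)
  ultimately show ?thesis by simp
qed

lemma ell_ge1: "1 \<le> x \<Longrightarrow> 1 \<le> ell j x"
  by (induction j x rule: ell.induct) auto

lemma wt_nonneg: "0 \<le> wt k n"
proof (cases "n = 0")
  case True then show ?thesis unfolding wt_def by simp
next
  case False
  then have "1 \<le> real n" by simp
  then have "0 \<le> ell j (real n)" for j using ell_ge1[of "real n" j] by linarith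
  then have "0 \<le> (\<Prod>j<k. ell j (real n))" by (intro prod_nonneg) auto
  then show ?thesis unfolding wt_def by simp
qed

lemma Dif_add: "Dif par (\<lambda>w. f w + g w) v \<le> Dif par f v + Dif par g v"
proof -
  have "f v + g v - (f (par v) + g (par v)) = (f v - f (par v)) + (g v - g (par v))" by simp
  then show ?thesis unfolding Dif_def by (metis norm_triangle_ineq)
qed

lemma Dif_diff: "Dif par (\<lambda>w. f w - g w) v \<le> Dif par f v + Dif par g v"
proof -
  have "f v - g v - (f (par v) - g (par v)) = (f v - f (par v)) - (g v - g (par v))" by simp
  then show ?thesis unfolding Dif_def by (metis norm_triangle_ineq4)
qed

lemma Dif_mult: "Dif par (\<lambda>w. c * f w) v = cmod c * Dif par f v"
  unfolding Dif_def by (metis norm_mult right_diff_distrib)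

lemma Lk_iff: "f \<in> Lk par r k \<longleftrightarrow> (\<exists>B. \<forall>v. v \<noteq> r \<longrightarrow> wt k (vlen par r v) * Dif par f v \<le> B)"
  unfolding Lk_def bdd_above_def by auto


lemma normk_ge:
  assumes "f \<in> Lk par r k" "v \<noteq> r"
  shows "wt k (vlen par r v) * Dif par f v \<le> normk par r k f"
proof -
  have "bdd_above ((\<lambda>v. wt k (vlen par r v) * Dif par f v) ` {v. v \<noteq> r})"
    using assms(1) unfolding Lk_def by simp
  then have "wt k (vlen par r v) * Dif par f v \<le> (SUP v\<in>{v. v \<noteq> r}. wt k (vlen par r v) * Dif par f v)"
    using assms(2) by (intro cSUP_upper) auto
  then show ?thesis unfolding normk_def using norm_ge_zero[of "f r"] by linarith
qed

lemma Lk_add: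
  assumes "f \<in> Lk par r k" "g \<in> Lk par r k"
  shows "(\<lambda>w. f w + g w) \<in> Lk par r k" "(\<lambda>w. f w - g w) \<in> Lk par r k"
proof -
  obtain B1 where B1: "\<And>v. v \<noteq> r \<Longrightarrow> wt k (vlen par r v) * Dif par f v \<le> B1" using assms(1) unfolding Lk_iff by blast
  obtain B2 where B2: "\<And>v. v \<noteq> r \<Longrightarrow> wt k (vlen par r v) * Dif par g v \<le> B2" using assms(2) unfolding Lk_iff by blast
  have "wt k (vlen par r v) * Dif par (\<lambda>w. f w + g w) v \<le> B1 + B2" if "v \<noteq> r" for v
  proof -
    have "wt k (vlen par r v) * Dif par (\<lambda>w. f w + g w) v \<le> wt k (vlen par r v) * (Dif par f v + Dif par g v)"
      by (intro mult_left_mono Dif_add wt_nonneg)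
    then show ?thesis using B1[OF that] B2[OF that] by (simp add: distrib_left)
  qed
  then show "(\<lambda>w. f w + g w) \<in> Lk par r k" unfolding Lk_iff by blast
  have "wt k (vlen par r v) * Dif par (\<lambda>w. f w - g w) v \<le> B1 + B2" if "v \<noteq> r" for v
  proof -
    have "wt k (vlen par r v) * Dif par (\<lambda>w. f w - g w) v \<le> wt k (vlen par r v) * (Dif par f v + Dif par g v)"
      by (intro mult_left_mono Dif_diff wt_nonneg)
    then show ?thesis using B1[OF that] B2[OF that] by (simp add: distrib_left)
  qed
  then show "(\<lambda>w. f w - g w) \<in> Lk par r k" unfolding Lk_iff by blast
qed

lemma Lk0_add:
  assumes "f \<in> Lk0 par r k" "g \<in> Lk0 par r k"
  shows "(\<lambda>w. f w + g w) \<in> Lk0 par r k"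
proof -
  have fL: "f \<in> Lk par r k" using assms(1) unfolding Lk0_def by simp
  have gL: "g \<in> Lk par r k" using assms(2) unfolding Lk0_def by simp
  have L: "(\<lambda>w. f w + g w) \<in> Lk par r k" using Lk_add(1)[OF fL gL] .
  have "\<exists>M. \<forall>v. v \<noteq> r \<longrightarrow> vlen par r v \<ge> M \<longrightarrow> wt k (vlen par r v) * Dif par (\<lambda>w. f w + g w) v < e" if e: "e > 0" for e
  proof -
    have e2: "e/2 > 0" using e by simp
    obtain M1 where M1: "\<And>v. v \<noteq> r \<Longrightarrow> vlen par r v \<ge> M1 \<Longrightarrow> wt k (vlen par r v) * Dif par f v < e/2"
      using assms(1) e2 unfolding Lk0_def mem_Collect_eq by blast
    obtain M2 where M2: "\<And>v. v \<noteq> r \<Longrightarrow> vlen par r v \<ge> M2 \<Longrightarrow> wt k (vlen par r v) * Dif par g v < e/2"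
      using assms(2) e2 unfolding Lk0_def mem_Collect_eq by blast
    have "wt k (vlen par r v) * Dif par (\<lambda>w. f w + g w) v < e" if "v \<noteq> r" "vlen par r v \<ge> max M1 M2" for v
    proof -
      have "wt k (vlen par r v) * Dif par (\<lambda>w. f w + g w) v \<le> wt k (vlen par r v) * (Dif par f v + Dif par g v)"
        by (intro mult_left_mono Dif_add wt_nonneg)
      moreover have "vlen par r v \<ge> M1" "vlen par r v \<ge> M2" using that(2) by auto
      ultimately show ?thesis using M1[OF that(1)] M2[OF that(1)] by (simp add: distrib_left)
    qed
    then show ?thesis by blast
  qed
  note E = this
  show ?thesis unfolding Lk0_def by (intro CollectI conjI L allI impI) (erule E)
qed

lemma Lk0_mult:
  assumes "f \<in> Lk0 par r k"
  shows "(\<lambda>w. c * f w) \<in> Lk0 par r k"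
proof -
  obtain B where B: "\<And>v. v \<noteq> r \<Longrightarrow> wt k (vlen par r v) * Dif par f v \<le> B"
    using assms unfolding Lk0_def mem_Collect_eq Lk_iff by blast
  have "wt k (vlen par r v) * Dif par (\<lambda>w. c * f w) v \<le> cmod c * B" if "v \<noteq> r" for v
  proof -
    have "wt k (vlen par r v) * Dif par (\<lambda>w. c * f w) v = cmod c * (wt k (vlen par r v) * Dif par f v)"
      by (simp add: Dif_mult)
    also have "\<dots> \<le> cmod c * B" using B[OF that] by (intro mult_left_mono) auto
    finally show ?thesis .
  qed
  then have L: "(\<lambda>w. c * f w) \<in> Lk par r k" unfolding Lk_iff by blast
  have "\<exists>M. \<forall>v. v \<noteq> r \<longrightarrow> vlen par r v \<ge> M \<longrightarrow> wt k (vlen par r v) * Dif par (\<lambda>w. c * f w) v < e" if e: "e > 0" for e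
  proof -
    have "cmod c + 1 > 0" using norm_ge_zero[of c] by linarith
    note cpos = this
    then have "e / (cmod c + 1) > 0" using e by simp
    then obtain M where M: "\<And>v. v \<noteq> r \<Longrightarrow> vlen par r v \<ge> M \<Longrightarrow> wt k (vlen par r v) * Dif par f v < e / (cmod c + 1)"
      using assms unfolding Lk0_def mem_Collect_eq by blast
    have "wt k (vlen par r v) * Dif par (\<lambda>w. c * f w) v < e" if "v \<noteq> r" "vlen par r v \<ge> M" for v
    proof -
      have a: "wt k (vlen par r v) * Dif par (\<lambda>w. c * f w) v = cmod c * (wt k (vlen par r v) * Dif par f v)"
        by (simp add: Dif_mult)
      have "cmod c * (wt k (vlen par r v) * Dif par f v) \<le> (cmod c + 1) * (wt k (vlen par r v) * Dif par f v)"
      proof -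
        have "0 \<le> wt k (vlen par r v) * Dif par f v"
          using wt_nonneg[of k "vlen par r v"] unfolding Dif_def by (intro mult_nonneg_nonneg) auto
        then show ?thesis by (intro mult_right_mono) auto
      qed
      also have "\<dots> < (cmod c + 1) * (e / (cmod c + 1))"
        using M[OF that] by (intro mult_strict_left_mono cpos)
      also have "\<dots> = e" using cpos by simp
      finally show ?thesis unfolding a .
    qed
    then show ?thesis by blast
  qed
  note E = this
  show ?thesis unfolding Lk0_def by (intro CollectI conjI L allI impI) (erule E)
qed


lemma Pset_Lk0:
  fixes N :: nat and a :: "nat \<Rightarrow> complex"
  assumes rt: "rooted_tree par r"
  shows "(\<lambda>w. \<Sum>i<N. a i * pv par (vs i) w) \<in> Lk0 par r k"
proof -
  define g where "g = (\<lambda>w. \<Sum>i<N. a i * pv par (vs i) w)"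
  have gd: "g w - g (par w) = (\<Sum>i<N. if vs i = w then a i else 0)" if "w \<noteq> r" for w
  proof -
    have "g w - g (par w) = (\<Sum>i<N. a i * (pv par (vs i) w - pv par (vs i) (par w)))"
      unfolding g_def by (simp add: sum_subtractf right_diff_distrib)
    also have "\<dots> = (\<Sum>i<N. if vs i = w then a i else 0)"
      using pv_step[OF rt that] by (intro sum.cong) auto
    finally show ?thesis .
  qed
  define C where "C = (\<Sum>i<N. cmod (a i))"
  define W where "W = (\<Sum>i<N. wt k (vlen par r (vs i)))"
  have C0: "C \<ge> 0" unfolding C_def by (simp add: sum_nonneg)
  have W0: "W \<ge> 0" unfolding W_def by (simp add: sum_nonneg wt_nonneg)
  have difC: "Dif par g w \<le> C" if "w \<noteq> r" for w
  proof -
    have "Dif par g w = cmod (\<Sum>i<N. if vs i = w then a i else 0)" unfolding Dif_def gd[OF that] ..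
    also have "\<dots> \<le> (\<Sum>i<N. cmod (if vs i = w then a i else 0))" by (rule norm_sum)
    also have "\<dots> \<le> C" unfolding C_def by (intro sum_mono) auto
    finally show ?thesis .
  qed
  have dif0: "Dif par g w = 0" if "w \<noteq> r" "\<forall>i<N. vs i \<noteq> w" for w
  proof -
    have "(\<Sum>i<N. if vs i = w then a i else 0) = 0" using that(2) by (intro sum.neutral) auto
    then show ?thesis unfolding Dif_def gd[OF that(1)] by simp
  qed
  have "wt k (vlen par r w) * Dif par g w \<le> W * C" if "w \<noteq> r" for w
  proof (cases "\<exists>i<N. vs i = w")
    case True
    then obtain i where i: "i < N" "vs i = w" by blast
    have "wt k (vlen par r (vs i)) \<le> W" unfolding W_def
      by (rule member_le_sum) (use i wt_nonneg in auto)
    then have "wt k (vlen par r w) \<le> W" using i by simp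
    moreover have "0 \<le> Dif par g w" unfolding Dif_def by simp
    ultimately show ?thesis using difC[OF that] W0 by (intro mult_mono) auto
  next
    case False
    then show ?thesis using dif0[OF that] W0 C0 by simp
  qed
  then have L: "g \<in> Lk par r k" unfolding Lk_iff by blast
  define M where "M = Suc (\<Sum>i<N. vlen par r (vs i))"
  have "wt k (vlen par r w) * Dif par g w < e" if "e > 0" "w \<noteq> r" "vlen par r w \<ge> M" for w e
  proof -
    have "\<forall>i<N. vs i \<noteq> w"
    proof (intro allI impI notI)
      fix i assume "i < N" "vs i = w"
      then have "vlen par r (vs i) \<le> (\<Sum>i<N. vlen par r (vs i))"
        by (intro member_le_sum) auto
      then show False using that(3) \<open>vs i = w\<close> unfolding M_def by simp
    qed
    then show ?thesis using dif0[OF that(2)] that(1) by simp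
  qed
  then have E: "\<forall>e>0. \<exists>M. \<forall>v. v \<noteq> r \<longrightarrow> vlen par r v \<ge> M \<longrightarrow> wt k (vlen par r v) * Dif par g v < e"
    by blast
  have "g \<in> Lk0 par r k" unfolding Lk0_def by (rule CollectI, rule conjI[OF L E])
  then show ?thesis unfolding g_def .
qed

lemma closed_Lk0:
  assumes f: "f \<in> Lk par r k"
    and ap: "\<forall>\<epsilon>>0. \<exists>g\<in>Lk0 par r k. normk par r k (\<lambda>w. f w - g w) < \<epsilon>"
  shows "f \<in> Lk0 par r k"
proof -
  have "\<exists>M. \<forall>v. v \<noteq> r \<longrightarrow> vlen par r v \<ge> M \<longrightarrow> wt k (vlen par r v) * Dif par f v < e" if e: "e > 0" for e
  proof -
    have e2: "e/2 > 0" using e by simp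
    obtain g where g: "g \<in> Lk0 par r k" "normk par r k (\<lambda>w. f w - g w) < e/2"
      using ap e2 by blast
    obtain M where M: "\<And>v. v \<noteq> r \<Longrightarrow> vlen par r v \<ge> M \<Longrightarrow> wt k (vlen par r v) * Dif par g v < e/2"
      using g(1) e2 unfolding Lk0_def mem_Collect_eq by blast
    have gL: "g \<in> Lk par r k" using g(1) unfolding Lk0_def by simp
    have fgL: "(\<lambda>w. f w - g w) \<in> Lk par r k" using Lk_add(2)[OF f gL] .
    have "wt k (vlen par r v) * Dif par f v < e" if "v \<noteq> r" "vlen par r v \<ge> M" for v
    proof -
      have "Dif par f v \<le> Dif par (\<lambda>w. f w - g w) v + Dif par g v"
        using Dif_add[of par "\<lambda>w. f w - g w" g v] by simp
      then have "wt k (vlen par r v) * Dif par f v \<le> wt k (vlen par r v) * Dif par (\<lambda>w. f w - g w) v + wt k (vlen par r v) * Dif par g v"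
        using wt_nonneg[of k "vlen par r v"] by (metis distrib_left mult_left_mono)
      moreover have "wt k (vlen par r v) * Dif par (\<lambda>w. f w - g w) v \<le> normk par r k (\<lambda>w. f w - g w)"
        using normk_ge[OF fgL that(1)] .
      ultimately show ?thesis using g(2) M[OF that] by linarith
    qed
    then show ?thesis by blast
  qed
  note E = this
  show ?thesis unfolding Lk0_def by (intro CollectI conjI f allI impI) (erule E)
qed

definition QC :: "complex set" where "QC = {z. Re z \<in> \<rat> \<and> Im z \<in> \<rat>}"

lemma countable_QC: "countable QC"
proof -
  have "QC \<subseteq> (\<lambda>(a,b). Complex a b) ` (\<rat> \<times> \<rat>)"
  proof
    fix z assume "z \<in> QC"
    then have "(Re z, Im z) \<in> \<rat> \<times> \<rat>" unfolding QC_def by simp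
    moreover have "z = (\<lambda>(a,b). Complex a b) (Re z, Im z)" by simp
    ultimately show "z \<in> (\<lambda>(a,b). Complex a b) ` (\<rat> \<times> \<rat>)" by blast
  qed
  moreover have "countable ((\<lambda>(a,b). Complex a b) ` (\<rat> \<times> \<rat>))"
    using countable_rat by (intro countable_image countable_SIGMA) auto
  ultimately show ?thesis by (rule countable_subset)
qed

lemma QC_dense:
  assumes "d > 0" shows "\<exists>q\<in>QC. cmod (z - q) < d"
proof -
  obtain a where a: "a \<in> \<rat>" "Re z - d/2 < a" "a < Re z + d/2"
    using Rats_dense_in_real[of "Re z - d/2" "Re z + d/2"] assms by auto
  obtain b where b: "b \<in> \<rat>" "Im z - d/2 < b" "b < Im z + d/2"
    using Rats_dense_in_real[of "Im z - d/2" "Im z + d/2"] assms by auto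
  have "cmod (z - Complex a b) \<le> \<bar>Re z - a\<bar> + \<bar>Im z - b\<bar>"
    using cmod_le[of "z - Complex a b"] by simp
  also have "\<dots> < d" using a b by (simp add: abs_less_iff)
  finally show ?thesis using a(1) b(1) unfolding QC_def by (intro bexI[of _ "Complex a b"]) auto
qed

definition Dset :: "('v \<Rightarrow> 'v) \<Rightarrow> ('v \<Rightarrow> complex) set" where
  "Dset par = (\<lambda>xs. (\<lambda>w. \<Sum>i<length xs. fst (xs!i) * pv par (snd (xs!i)) w)) ` lists (QC \<times> UNIV)"

lemma Dset_Pset: "Dset par \<subseteq> Pset par"
proof
  fix h assume "h \<in> Dset par"
  then obtain xs where h: "h = (\<lambda>w. \<Sum>i<length xs. fst (xs!i) * pv par (snd (xs!i)) w)"
    unfolding Dset_def by blast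
  show "h \<in> Pset par" unfolding Pset_def mem_Collect_eq
    by (rule exI[of _ "length xs"], rule exI[of _ "\<lambda>i. fst (xs!i)"], rule exI[of _ "\<lambda>i. snd (xs!i)"]) (use h in simp)
qed

lemma countable_Dset:
  fixes par :: "'v \<Rightarrow> 'v"
  assumes gt: "good_tree par r" shows "countable (Dset par)"
proof -
  have "countable (QC \<times> (UNIV::'v set))"
    using countable_QC countable_vertices[OF gt] by (intro countable_SIGMA)
  then have "countable (lists (QC \<times> (UNIV::'v set)))" by (rule countable_lists)
  then show ?thesis unfolding Dset_def by (rule countable_image)
qed


lemma nonempty_nonroot:
  assumes gt: "good_tree par r" shows "{v. v \<noteq> r} \<noteq> {}"
proof -
  have "card (children par r r) \<ge> 2" using gt unfolding good_tree_def by (metis add_0_right)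
  then have "children par r r \<noteq> {}" by auto
  then show ?thesis unfolding children_def by blast
qed

lemma dense_D:
  assumes gt: "good_tree par r" and f: "f \<in> Lk0 par r k" and e: "e > 0"
  shows "\<exists>h\<in>Dset par. normk par r k (\<lambda>w. f w - h w) < e"
proof -
  have rt: "rooted_tree par r" using gt unfolding good_tree_def by simp
  have pr: "par r = r" using rt unfolding rooted_tree_def by simp
  have e2: "e/2 > 0" using e by simp
  obtain M where M: "\<And>v. v \<noteq> r \<Longrightarrow> vlen par r v \<ge> M \<Longrightarrow> wt k (vlen par r v) * Dif par f v < e/2"
    using f e2 unfolding Lk0_def mem_Collect_eq by blast
  define A where "A = {u. (par^^M) u = r}"
  have finA: "finite A" unfolding A_def by (rule finite_ball[OF gt])
  define W where "W = 1 + (\<Sum>n\<le>M. wt k n)"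
  have W1: "W \<ge> 1" unfolding W_def by (simp add: sum_nonneg wt_nonneg)
  define d where "d = e / (4 * W)"
  have d0: "d > 0" unfolding d_def using e W1 by simp
  have dW: "W * d = e / 4" unfolding d_def using W1 by simp
  have de: "d \<le> e / 4" using mult_right_mono[OF W1, of d] d0 dW by simp
  define t where "t u = (if u = r then f r else f u - f (par u))" for u
  have "\<forall>u. \<exists>q. q \<in> QC \<and> cmod (t u - q) < d" using QC_dense[OF d0] by blast
  then have "\<exists>c. \<forall>u. c u \<in> QC \<and> cmod (t u - c u) < d" by (rule choice)
  then obtain c where c0: "\<forall>u. c u \<in> QC \<and> cmod (t u - c u) < d" by (elim exE)
  have c: "\<And>u. c u \<in> QC" "\<And>u. cmod (t u - c u) < d" using c0 by auto
  obtain l where l: "set l = A" "distinct l" using finite_distinct_list[OF finA] by blast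
  define h where "h w = (\<Sum>u\<in>A. c u * pv par u w)" for w
  have hD: "h \<in> Dset par"
  proof -
    define xs where "xs = map (\<lambda>u. (c u, u)) l"
    have xsl: "xs \<in> lists (QC \<times> UNIV)" unfolding xs_def using c(1) by auto
    have "h w = (\<Sum>i<length xs. fst (xs!i) * pv par (snd (xs!i)) w)" for w
    proof -
      have "h w = sum_list (map (\<lambda>u. c u * pv par u w) l)"
        using sum.distinct_set_conv_list[OF l(2), of "\<lambda>u. c u * pv par u w"] l(1) unfolding h_def by simp
      also have "\<dots> = (\<Sum>i<length l. c (l!i) * pv par (l!i) w)"
        by (simp add: sum_list_sum_nth atLeast0LessThan)
      also have "\<dots> = (\<Sum>i<length xs. fst (xs!i) * pv par (snd (xs!i)) w)"
        unfolding xs_def by simp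
      finally show ?thesis .
    qed
    then have "h = (\<lambda>w. \<Sum>i<length xs. fst (xs!i) * pv par (snd (xs!i)) w)" by (rule ext)
    then show ?thesis unfolding Dset_def by (rule image_eqI[OF _ xsl])
  qed
  have rA: "r \<in> A" unfolding A_def using fp_iter[of par r, OF pr] by simp
  have hr: "h r = c r"
  proof -
    have "h r = (\<Sum>u\<in>A. if u = r then c u else 0)"
      unfolding h_def using pv_root[OF rt] by (intro sum.cong) auto
    also have "\<dots> = c r" using rA finA by (simp add: sum.delta')
    finally show ?thesis .
  qed
  have hstep: "h w - h (par w) = (if w \<in> A then c w else 0)" if "w \<noteq> r" for w
  proof -
    have "h w - h (par w) = (\<Sum>u\<in>A. c u * (pv par u w - pv par u (par w)))"
      unfolding h_def by (simp add: sum_subtractf right_diff_distrib)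
    also have "\<dots> = (\<Sum>u\<in>A. if u = w then c u else 0)"
      using pv_step[OF rt that] by (intro sum.cong) auto
    also have "\<dots> = (if w \<in> A then c w else 0)" using finA by (simp add: sum.delta')
    finally show ?thesis .
  qed
  have bound: "wt k (vlen par r w) * Dif par (\<lambda>w. f w - h w) w \<le> e/2" if "w \<noteq> r" for w
  proof (cases "w \<in> A")
    case True
    have "Dif par (\<lambda>w. f w - h w) w = cmod ((f w - f (par w)) - (h w - h (par w)))"
      unfolding Dif_def by (simp add: algebra_simps)
    also have "\<dots> = cmod (t w - c w)" using hstep[OF that] True that unfolding t_def by simp
    finally have D: "Dif par (\<lambda>w. f w - h w) w < d" using c(2)[of w] by simp
    have "vlen par r w \<le> M" using True unfolding A_def by (simp add: vlen_le)
    then have "wt k (vlen par r w) \<le> (\<Sum>n\<le>M. wt k n)"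
      by (intro member_le_sum) (auto simp: wt_nonneg)
    then have wW: "wt k (vlen par r w) \<le> W" unfolding W_def by simp
    have "wt k (vlen par r w) * Dif par (\<lambda>w. f w - h w) w \<le> W * d"
      using wW D wt_nonneg[of k "vlen par r w"] W1 unfolding Dif_def
      by (intro mult_mono) auto
    then show ?thesis using dW e by simp
  next
    case False
    have "Dif par (\<lambda>w. f w - h w) w = cmod ((f w - f (par w)) - (h w - h (par w)))"
      unfolding Dif_def by (simp add: algebra_simps)
    also have "\<dots> = Dif par f w" using hstep[OF that] False unfolding Dif_def by simp
    finally have D: "Dif par (\<lambda>w. f w - h w) w = Dif par f w" .
    have "vlen par r w \<ge> M"
    proof (rule ccontr)
      assume "\<not> vlen par r w \<ge> M"
      then have "(par^^M) w = r" using reach_mono[of par r, OF pr vlen_reach[OF rt]] by simp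
      then show False using False unfolding A_def by simp
    qed
    then show ?thesis using M[OF that] D by simp
  qed
  have "(SUP v\<in>{v. v \<noteq> r}. wt k (vlen par r v) * Dif par (\<lambda>w. f w - h w) v) \<le> e/2"
    using nonempty_nonroot[OF gt] bound by (intro cSUP_least) auto
  moreover have "cmod (f r - h r) < d" using hr c(2)[of r] unfolding t_def by simp
  ultimately have "normk par r k (\<lambda>w. f w - h w) < d + e/2" unfolding normk_def by simp
  also have "\<dots> < e" using de e by simp
  finally show ?thesis using hD by blast
qed

theorem proposition2p10:
  fixes par :: "'v \<Rightarrow> 'v" and r :: 'v and k :: nat
  assumes "good_tree par r"
  shows "Pset par \<subseteq> Lk0 par r k
    \<and> (\<forall>f\<in>Lk0 par r k. \<forall>\<epsilon>>0. \<exists>g\<in>Pset par. normk par r k (\<lambda>w. f w - g w) < \<epsilon>)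
    \<and> Lk0 par r k \<subseteq> Lk par r k
    \<and> (\<lambda>w. 0) \<in> Lk0 par r k
    \<and> (\<forall>f\<in>Lk0 par r k. \<forall>g\<in>Lk0 par r k. (\<lambda>w. f w + g w) \<in> Lk0 par r k)
    \<and> (\<forall>c. \<forall>f\<in>Lk0 par r k. (\<lambda>w. c * f w) \<in> Lk0 par r k)
    \<and> (\<forall>f\<in>Lk par r k. (\<forall>\<epsilon>>0. \<exists>g\<in>Lk0 par r k. normk par r k (\<lambda>w. f w - g w) < \<epsilon>) \<longrightarrow> f \<in> Lk0 par r k)
    \<and> (\<exists>D. countable D \<and> D \<subseteq> Lk0 par r k \<and>
          (\<forall>f\<in>Lk0 par r k. \<forall>\<epsilon>>0. \<exists>g\<in>D. normk par r k (\<lambda>w. f w - g w) < \<epsilon>))"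
proof -
  have rt: "rooted_tree par r" using assms unfolding good_tree_def by simp
  have P: "Pset par \<subseteq> Lk0 par r k"
  proof
    fix g assume "g \<in> Pset par"
    then obtain N a vs where "g = (\<lambda>w. \<Sum>i<(N::nat). (a::nat \<Rightarrow> complex) i * pv par (vs i) w)"
      unfolding Pset_def by blast
    then show "g \<in> Lk0 par r k" using Pset_Lk0[OF rt] by simp
  qed
  have DL: "Dset par \<subseteq> Lk0 par r k" using Dset_Pset P by (rule order.trans)
  have dD: "\<forall>f\<in>Lk0 par r k. \<forall>\<epsilon>>0. \<exists>g\<in>Dset par. normk par r k (\<lambda>w. f w - g w) < \<epsilon>"
  proof (intro ballI allI impI)
    fix f and \<epsilon> :: real assume "f \<in> Lk0 par r k" "\<epsilon> > 0"
    then show "\<exists>g\<in>Dset par. normk par r k (\<lambda>w. f w - g w) < \<epsilon>" by (rule dense_D[OF assms])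
  qed
  have dP: "\<forall>f\<in>Lk0 par r k. \<forall>\<epsilon>>0. \<exists>g\<in>Pset par. normk par r k (\<lambda>w. f w - g w) < \<epsilon>"
  proof (intro ballI allI impI)
    fix f and \<epsilon> :: real assume "f \<in> Lk0 par r k" "\<epsilon> > 0"
    then obtain g where "g \<in> Dset par" "normk par r k (\<lambda>w. f w - g w) < \<epsilon>" using dense_D[OF assms] by blast
    moreover have "g \<in> Pset par" using Dset_Pset[of par] \<open>g \<in> Dset par\<close> by (rule subsetD)
    ultimately show "\<exists>g\<in>Pset par. normk par r k (\<lambda>w. f w - g w) < \<epsilon>" by (intro bexI)
  qed
  have sub: "Lk0 par r k \<subseteq> Lk par r k"
  proof
    fix f assume "f \<in> Lk0 par r k"
    then show "f \<in> Lk par r k" unfolding Lk0_def mem_Collect_eq by (rule conjunct1)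
  qed
  have z: "(\<lambda>w. 0) \<in> Lk0 par r k"
  proof -
    have "(\<lambda>w. 0) \<in> Lk par r k" unfolding Lk_iff Dif_def by auto
    moreover have "\<forall>\<epsilon>>0. \<exists>M. \<forall>v. v \<noteq> r \<longrightarrow> vlen par r v \<ge> M \<longrightarrow> wt k (vlen par r v) * Dif par (\<lambda>w. 0) v < \<epsilon>"
      unfolding Dif_def by auto
    ultimately show ?thesis unfolding Lk0_def mem_Collect_eq by (rule conjI)
  qed
  have add: "\<forall>f\<in>Lk0 par r k. \<forall>g\<in>Lk0 par r k. (\<lambda>w. f w + g w) \<in> Lk0 par r k"
  proof (intro ballI)
    fix f g assume "f \<in> Lk0 par r k" "g \<in> Lk0 par r k"
    then show "(\<lambda>w. f w + g w) \<in> Lk0 par r k" by (rule Lk0_add)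
  qed
  have mul: "\<forall>c. \<forall>f\<in>Lk0 par r k. (\<lambda>w. c * f w) \<in> Lk0 par r k"
  proof (intro allI ballI)
    fix c f assume "f \<in> Lk0 par r k"
    then show "(\<lambda>w. c * f w) \<in> Lk0 par r k" by (rule Lk0_mult)
  qed
  have cl: "\<forall>f\<in>Lk par r k. (\<forall>\<epsilon>>0. \<exists>g\<in>Lk0 par r k. normk par r k (\<lambda>w. f w - g w) < \<epsilon>) \<longrightarrow> f \<in> Lk0 par r k"
  proof (intro ballI impI)
    fix f assume "f \<in> Lk par r k" "\<forall>\<epsilon>>0. \<exists>g\<in>Lk0 par r k. normk par r k (\<lambda>w. f w - g w) < \<epsilon>"
    then show "f \<in> Lk0 par r k" by (rule closed_Lk0)
  qed
  have sep: "\<exists>D. countable D \<and> D \<subseteq> Lk0 par r k \<and>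
          (\<forall>f\<in>Lk0 par r k. \<forall>\<epsilon>>0. \<exists>g\<in>D. normk par r k (\<lambda>w. f w - g w) < \<epsilon>)"
    by (rule exI[of _ "Dset par"], intro conjI countable_Dset[OF assms] DL dD)
  show ?thesis by (intro conjI P dP sub z add mul cl sep)
qed

end
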